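(* Let $A\in\mathbb{R}^{n\times n}$, $B\in\mathbb{R}^n$ with $(A,B)$ controllable, $\mathcal{C}=(B\;AB\;\cdots\;A^{n-1}B)$, and suppose $e_n^T\mathcal{C}^{-1}=C_{n-1}C_{n-2}\cdots C_1$ with $C_k\in\mathbb{R}^{(n-k)\times(n-k+1)}$ for $k=1,\dots,n-1$. Let $\Phi(s)=s^n+p_1s^{n-1}+\dots+p_{n-1}s+p_n$ be a real polynomial. Put $A_1=A$ and $A_k=C_{k-1}C_{k-2}\cdots C_1A^k$ for $k=2,\dots,n$. Define $$K_0=p_nI_n,\qquad K_k=C_k\,(A_k\,p_{n-k}+K_{k-1})\quad(k=1,\dots,n-1),\qquad K=A_n+K_{n-1}.$$ Then $K=e_n^T\mathcal{C}^{-1}\Phi(A)$ and $\det(sI-A+BK)=\Phi(s)$.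
   Context: $e_n$ is the $n$-th canonical basis vector; $K_k$ is an $(n-k)\times n$ matrix and $K$ a row vector. *)

theory Defs
  imports "Jordan_Normal_Form.Jordan_Normal_Form"
          "Jordan_Normal_Form.Gauss_Jordan_Elimination"
          "Jordan_Normal_Form.DL_Rank"
begin

text \<open>Matrices are JNF matrices of type real mat with explicit dimensions.
  A is n x n, B is n x 1 (a column), C k is (n-k) x (n-k+1).\<close>

definition ctrb_mat :: "nat \<Rightarrow> real mat \<Rightarrow> real mat \<Rightarrow> real mat" where
  "ctrb_mat n A B = mat n n (\<lambda>(i, j). ((A ^\<^sub>m j) * B) $$ (i, 0))"

definition controllable :: "nat \<Rightarrow> real mat \<Rightarrow> real mat \<Rightarrow> bool" where
  "controllable n A B \<longleftrightarrow> vec_space.rank n (ctrb_mat n A B) = n"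

definition en_row :: "nat \<Rightarrow> real mat" where
  "en_row n = mat 1 n (\<lambda>(i, j). if j = n - 1 then 1 else 0)"

fun Cprod :: "(nat \<Rightarrow> real mat) \<Rightarrow> nat \<Rightarrow> nat \<Rightarrow> real mat" where
  "Cprod C n 0 = 1\<^sub>m n"
| "Cprod C n (Suc k) = C (Suc k) * Cprod C n k"

definition Amat :: "(nat \<Rightarrow> real mat) \<Rightarrow> nat \<Rightarrow> real mat \<Rightarrow> nat \<Rightarrow> real mat" where
  "Amat C n A k = (if k = 1 then A else Cprod C n (k - 1) * A ^\<^sub>m k)"

fun Kseq :: "(nat \<Rightarrow> real mat) \<Rightarrow> nat \<Rightarrow> real mat \<Rightarrow> (nat \<Rightarrow> real) \<Rightarrow> nat \<Rightarrow> real mat" where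
  "Kseq C n A p 0 = p n \<cdot>\<^sub>m 1\<^sub>m n"
| "Kseq C n A p (Suc k) =
     C (Suc k) * (p (n - Suc k) \<cdot>\<^sub>m Amat C n A (Suc k) + Kseq C n A p k)"

definition Kgain :: "(nat \<Rightarrow> real mat) \<Rightarrow> nat \<Rightarrow> real mat \<Rightarrow> (nat \<Rightarrow> real) \<Rightarrow> real mat" where
  "Kgain C n A p = Amat C n A n + Kseq C n A p (n - 1)"

definition Phi :: "nat \<Rightarrow> (nat \<Rightarrow> real) \<Rightarrow> real \<Rightarrow> real" where
  "Phi n p s = s ^ n + (\<Sum>i = 1..n. p i * s ^ (n - i))"

definition Phi_mat :: "nat \<Rightarrow> (nat \<Rightarrow> real) \<Rightarrow> real mat \<Rightarrow> real mat" where
  "Phi_mat n p A = mat n n (\<lambda>(i, j).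
     (A ^\<^sub>m n) $$ (i, j) + (\<Sum>k = 1..n. p k * (A ^\<^sub>m (n - k)) $$ (i, j)))"

end

theory Submission imports Defs begin

definition Nmat :: "nat \<Rightarrow> (nat \<Rightarrow> real) \<Rightarrow> real \<Rightarrow> real mat" where
  "Nmat n p s = mat n n (\<lambda>(i,l). (if i = l then s else 0) - (if l = Suc i then 1 else 0)
       + (if i = n - 1 then p (n - l) else 0))"

lemma det_Nmat:
  assumes n: "n \<ge> 1"
  shows "det (Nmat n p s) = s ^ n + (\<Sum>l<n. p (n - l) * s ^ l)"
proof -
  define N where "N = Nmat n p s"
  define W :: "real mat" where "W = mat n n (\<lambda>(i,j). if i = j then 1 else if j = 0 then s ^ i else 0)"
  define \<Phi> where "\<Phi> = s ^ n + (\<Sum>l<n. p (n - l) * s ^ l)"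
  have N: "N \<in> carrier_mat n n" unfolding N_def Nmat_def by auto
  have W: "W \<in> carrier_mat n n" unfolding W_def by auto
  have dW: "det W = 1"
    by (subst det_lower_triangular[OF _ W]) (auto simp: W_def prod_list_diag_prod)
  have NW: "N * W \<in> carrier_mat n n" using N W by auto
  have "s * s ^ (n - 1) = s ^ n" using n by (cases n) auto
  have col0: "(N * W) $$ (i, 0) = (if i = n - 1 then \<Phi> else 0)" if i: "i < n" for i
  proof -
    have "(N * W) $$ (i, 0) = (\<Sum>l<n. N $$ (i,l) * s ^ l)"
      using i n N W by (auto simp: scalar_prod_def W_def intro!: sum.cong)
    also have "\<dots> = (\<Sum>l<n. (if i = l then s * s ^ l else 0) - (if l = Suc i then s ^ l else 0)
       + (if i = n - 1 then p (n - l) * s ^ l else 0))"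
      using i by (intro sum.cong) (auto simp: N_def Nmat_def algebra_simps)
    also have "\<dots> = (if i = n - 1 then \<Phi> else 0)"
      using i n \<open>s * s ^ (n - 1) = s ^ n\<close> by (auto simp: sum.distrib sum_subtractf \<Phi>_def sum.If_cases power_Suc2)
    finally show ?thesis .
  qed
  have colj: "(N * W) $$ (i, j) = N $$ (i, j)" if i: "i < n" and j: "j < n" "j \<noteq> 0" for i j
  proof -
    have "(N * W) $$ (i, j) = (\<Sum>l<n. N $$ (i,l) * (if l = j then 1 else 0))"
      using i j N W by (auto simp: scalar_prod_def W_def intro!: sum.cong)
    also have "\<dots> = (\<Sum>l<n. if l = j then N $$ (i,l) else 0)" by (intro sum.cong) auto
    also have "\<dots> = N $$ (i, j)" using j by simp
    finally show ?thesis .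
  qed
  define D where "D = mat_delete (N * W) (n - 1) 0"
  have D: "D \<in> carrier_mat (n - 1) (n - 1)" unfolding D_def using mat_delete_carrier[OF NW] .
  have Dij: "D $$ (i, j) = (if i = Suc j then s else 0) - (if j = i then 1 else 0)"
    if "i < n - 1" "j < n - 1" for i j
    using that NW colj[of i "Suc j"] unfolding D_def mat_delete_def
    by (auto simp: N_def Nmat_def)
  have dD: "det D = (-1) ^ (n - 1)"
  proof -
    have "det D = (\<Prod>i = 0..<n - 1. D $$ (i, i))"
      by (subst det_lower_triangular[OF _ D]) (use D in \<open>auto simp: Dij prod_list_diag_prod\<close>)
    also have "\<dots> = (\<Prod>i = 0..<n - 1. -1)" by (intro prod.cong) (auto simp: Dij)
    finally show ?thesis by simp
  qed
  have "det (N * W) = (\<Sum>i<n. (N * W) $$ (i,0) * cofactor (N * W) i 0)"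
    using laplace_expansion_column[OF NW, of 0] n by auto
  also have "\<dots> = \<Phi> * cofactor (N * W) (n - 1) 0"
  proof -
    have "(\<Sum>i<n. (N * W) $$ (i,0) * cofactor (N * W) i 0)
       = (\<Sum>i<n. if i = n - 1 then \<Phi> * cofactor (N * W) i 0 else 0)"
      by (intro sum.cong) (auto simp: col0)
    also have "\<dots> = \<Phi> * cofactor (N * W) (n - 1) 0" using n by simp
    finally show ?thesis .
  qed
  also have "\<dots> = \<Phi>"
    unfolding cofactor_def D_def[symmetric] dD by (simp add: power_add[symmetric])
  finally have "det (N * W) = \<Phi>" .
  moreover have "det (N * W) = det N" using det_mult[OF N W] dW by simp
  ultimately show ?thesis unfolding N_def \<Phi>_def by simp
qed

lemma pow_mat_add:
  assumes A: "A \<in> carrier_mat n n"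
  shows "A ^\<^sub>m (i + d) = A ^\<^sub>m i * A ^\<^sub>m d"
proof (induction d)
  case 0 then show ?case using A by simp
next
  case (Suc d)
  have "A ^\<^sub>m (i + Suc d) = A ^\<^sub>m (i + d) * A" by simp
  also have "\<dots> = A ^\<^sub>m i * A ^\<^sub>m d * A" using Suc by simp
  also have "\<dots> = A ^\<^sub>m i * (A ^\<^sub>m d * A)" by (rule assoc_mult_mat[of _ n n _ n _ n]) (use A in auto)
  also have "\<dots> = A ^\<^sub>m i * A ^\<^sub>m (Suc d)" by simp
  finally show ?case .
qed

lemma Cprod_carrier:
  assumes Cdim: "\<And>k. 1 \<le> k \<Longrightarrow> k \<le> n - 1 \<Longrightarrow> C k \<in> carrier_mat (n - k) (n - k + 1)"
  shows "k \<le> n - 1 \<Longrightarrow> Cprod C n k \<in> carrier_mat (n - k) n"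
proof (induction k)
  case 0 then show ?case by simp
next
  case (Suc k)
  have "C (Suc k) \<in> carrier_mat (n - Suc k) (n - k)"
    using Cdim[of "Suc k"] Suc.prems by (simp add: Suc_diff_Suc)
  with Suc show ?case by auto
qed

fun Sseq :: "nat \<Rightarrow> real mat \<Rightarrow> (nat \<Rightarrow> real) \<Rightarrow> nat \<Rightarrow> real mat" where
  "Sseq n A p 0 = p n \<cdot>\<^sub>m 1\<^sub>m n"
| "Sseq n A p (Suc k) = p (n - Suc k) \<cdot>\<^sub>m A ^\<^sub>m (Suc k) + Sseq n A p k"

lemma Sseq_dim[simp]: "dim_row (Sseq n A p k) = n" "dim_col (Sseq n A p k) = n"
  by (induction k) auto

lemma Sseq_carrier: "A \<in> carrier_mat n n \<Longrightarrow> Sseq n A p k \<in> carrier_mat n n"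
  by (induction k) auto

lemma Sseq_index: "A \<in> carrier_mat n n \<Longrightarrow> i < n \<Longrightarrow> j < n \<Longrightarrow>
   Sseq n A p k $$ (i, j) = (\<Sum>l<Suc k. p (n - l) * (A ^\<^sub>m l) $$ (i, j))"
proof (induction k)
  case 0 then show ?case by simp
next
  case (Suc k)
  then show ?case using Sseq_carrier[OF Suc.prems(1)] pow_carrier_mat[OF Suc.prems(1), of "Suc k"]
    by (simp del: pow_mat.simps(2) add: algebra_simps)
qed

lemma Amat_eq: assumes A: "A \<in> carrier_mat n n" and k: "1 \<le> k"
  shows "Amat C n A k = Cprod C n (k - 1) * A ^\<^sub>m k"
proof (cases "k = 1")
  case True then show ?thesis using A by (simp add: Amat_def)
qed (simp add: Amat_def)

lemma Kseq_eq:
  assumes A: "A \<in> carrier_mat n n"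
    and Cdim: "\<And>k. 1 \<le> k \<Longrightarrow> k \<le> n - 1 \<Longrightarrow> C k \<in> carrier_mat (n - k) (n - k + 1)"
  shows "k \<le> n - 1 \<Longrightarrow> Kseq C n A p k = Cprod C n k * Sseq n A p k"
proof (induction k)
  case 0 then show ?case by simp
next
  case (Suc k)
  have Ck: "Cprod C n k \<in> carrier_mat (n - k) n" using Cprod_carrier[OF Cdim] Suc.prems by simp
  have Ak: "A ^\<^sub>m Suc k \<in> carrier_mat n n" by (rule pow_carrier_mat[OF A])
  have S: "Sseq n A p k \<in> carrier_mat n n" using Sseq_carrier[OF A] .
  have "Kseq C n A p (Suc k) = C (Suc k) * (p (n - Suc k) \<cdot>\<^sub>m (Cprod C n k * A ^\<^sub>m Suc k)
        + Cprod C n k * Sseq n A p k)"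
    using Suc Amat_eq[OF A, of "Suc k"] by simp
  also have "p (n - Suc k) \<cdot>\<^sub>m (Cprod C n k * A ^\<^sub>m Suc k) + Cprod C n k * Sseq n A p k
     = Cprod C n k * Sseq n A p (Suc k)"
    using mult_add_distrib_mat[OF Ck smult_carrier_mat[OF Ak] S] mult_smult_distrib[OF Ck Ak] by simp
  also have "C (Suc k) * (Cprod C n k * Sseq n A p (Suc k)) = Cprod C n (Suc k) * Sseq n A p (Suc k)"
  proof -
    have "C (Suc k) \<in> carrier_mat (n - Suc k) (n - k)"
      using Cdim[of "Suc k"] Suc.prems by (simp add: Suc_diff_Suc)
    then show ?thesis by (simp only: Cprod.simps assoc_mult_mat[OF _ Ck Sseq_carrier[OF A]])
  qed
  finally show ?case .
qed

lemma sum_rev_1n: "(\<Sum>k = 1..(n::nat). f k) = (\<Sum>l<n. f (n - l))"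
  by (rule sum.reindex_bij_witness[of _ "\<lambda>l. n - l" "\<lambda>k. n - k"]) (auto simp: diff_diff_cancel less_imp_le)

lemma mult_entry: "X \<in> carrier_mat r n \<Longrightarrow> Y \<in> carrier_mat n m \<Longrightarrow> i < r \<Longrightarrow> j < m \<Longrightarrow>
  (X * Y) $$ (i, j) = (\<Sum>t<n. X $$ (i, t) * Y $$ (t, j))"
  by (simp add: scalar_prod_def atLeast0LessThan)

theorem mainTheorem4:
  fixes n :: nat and A B :: "real mat" and C :: "nat \<Rightarrow> real mat" and p :: "nat \<Rightarrow> real"
  assumes n: "n \<ge> 1"
    and A: "A \<in> carrier_mat n n"
    and B: "B \<in> carrier_mat n 1"
    and ctrl: "controllable n A B"
    and Cdim: "\<And>k. 1 \<le> k \<Longrightarrow> k \<le> n - 1 \<Longrightarrow> C k \<in> carrier_mat (n - k) (n - k + 1)"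
    and factor: "en_row n * the (mat_inverse (ctrb_mat n A B)) = Cprod C n (n - 1)"
  shows "Kgain C n A p = en_row n * the (mat_inverse (ctrb_mat n A B)) * Phi_mat n p A
     \<and> (\<forall>s :: real. det (s \<cdot>\<^sub>m 1\<^sub>m n - A + B * Kgain C n A p) = Phi n p s)"
proof -
  define q where "q = Cprod C n (n - 1)"
  define P where "P = Phi_mat n p A"
  define K where "K = Kgain C n A p"
  have q: "q \<in> carrier_mat 1 n" using Cprod_carrier[OF Cdim, of "n - 1"] n unfolding q_def by simp
  have P: "P \<in> carrier_mat n n" unfolding P_def Phi_mat_def by simp
  have An: "A ^\<^sub>m n \<in> carrier_mat n n" using A by simp
  have S: "Sseq n A p (n - 1) \<in> carrier_mat n n" using Sseq_carrier[OF A] .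
  have Sn: "A ^\<^sub>m n + Sseq n A p (n - 1) = P"
  proof (rule eq_matI)
    fix i j assume "i < dim_row P" "j < dim_col P"
    then have ij: "i < n" "j < n" by (simp_all add: P_def Phi_mat_def)
    have "(A ^\<^sub>m n + Sseq n A p (n - 1)) $$ (i, j)
        = (A ^\<^sub>m n) $$ (i, j) + (\<Sum>l<n. p (n - l) * (A ^\<^sub>m l) $$ (i, j))"
      using ij A n Sseq_index[OF A ij, of p "n - 1"] by simp
    also have "(\<Sum>l<n. p (n - l) * (A ^\<^sub>m l) $$ (i, j)) = (\<Sum>k = 1..n. p k * (A ^\<^sub>m (n - k)) $$ (i, j))"
      unfolding sum_rev_1n by (intro sum.cong) auto
    finally show "(A ^\<^sub>m n + Sseq n A p (n - 1)) $$ (i, j) = P $$ (i, j)"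
      using ij by (simp add: P_def Phi_mat_def)
  qed (auto simp: P_def Phi_mat_def)
  have KqP: "K = q * P"
  proof -
    have "K = q * A ^\<^sub>m n + q * Sseq n A p (n - 1)"
      unfolding K_def Kgain_def q_def using Amat_eq[OF A n, of C] Kseq_eq[OF A Cdim, of "n - 1" p] by simp
    also have "\<dots> = q * P" using mult_add_distrib_mat[OF q An S] Sn by simp
    finally show ?thesis .
  qed
  have K: "K \<in> carrier_mat 1 n" using KqP q P by simp
  have part1: "Kgain C n A p = en_row n * the (mat_inverse (ctrb_mat n A B)) * Phi_mat n p A"
    using KqP unfolding K_def P_def q_def factor .
  define Ct where "Ct = ctrb_mat n A B"
  have Ct: "Ct \<in> carrier_mat n n" unfolding Ct_def ctrb_mat_def by simp
  have "det Ct \<noteq> 0" using vec_space.det_rank_iff[OF Ct] ctrl unfolding controllable_def Ct_def by simp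
  then have "mat_inverse Ct \<noteq> None"
    using det_non_zero_imp_unit[OF Ct, of "()"] mat_inverse(1)[OF Ct, of "()"] by blast
  then obtain Ci where "mat_inverse Ct = Some Ci" by auto
  from mat_inverse(2)[OF Ct this] have Ci: "Ci * Ct = 1\<^sub>m n" "Ci \<in> carrier_mat n n" by auto
  have E: "en_row n \<in> carrier_mat 1 n" unfolding en_row_def by simp
  have qCt: "q * Ct = en_row n"
  proof -
    have "q = en_row n * Ci" using factor \<open>mat_inverse Ct = Some Ci\<close> unfolding q_def Ct_def by simp
    then have "q * Ct = en_row n * (Ci * Ct)" using assoc_mult_mat[OF E Ci(2) Ct] by simp
    then show ?thesis using Ci E by simp
  qed
  define c where "c m = (q * A ^\<^sub>m m * B) $$ (0, 0)" for m
  have QA: "q * A ^\<^sub>m i \<in> carrier_mat 1 n" for i using mult_carrier_mat[OF q pow_carrier_mat[OF A]] .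
  have AB: "A ^\<^sub>m d * B \<in> carrier_mat n 1" for d using mult_carrier_mat[OF pow_carrier_mat[OF A] B] .
  have c_alt: "c m = (\<Sum>t<n. q $$ (0, t) * (A ^\<^sub>m m * B) $$ (t, 0))" for m
    unfolding c_def using assoc_mult_mat[OF q pow_carrier_mat[OF A] B] mult_entry[OF q AB] by simp
  have c: "c m = (if m = n - 1 then 1 else 0)" if m: "m < n" for m
  proof -
    have "(q * Ct) $$ (0, m) = (\<Sum>t<n. q $$ (0, t) * Ct $$ (t, m))" using mult_entry[OF q Ct] m by simp
    also have "\<dots> = c m" unfolding c_alt using m by (intro sum.cong) (auto simp: Ct_def ctrb_mat_def)
    finally show ?thesis using qCt m n by (simp add: en_row_def)
  qed
  define T where "T = mat n n (\<lambda>(i, j). (q * A ^\<^sub>m i) $$ (0, j))"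
  have T: "T \<in> carrier_mat n n" unfolding T_def by simp
  have Trow: "(T * M) $$ (i, j) = (q * A ^\<^sub>m i * M) $$ (0, j)"
    if M: "M \<in> carrier_mat n m" and ij: "i < n" "j < m" for M m i j
    using mult_entry[OF T M ij] mult_entry[OF QA M _ ij(2)] ij by (simp add: T_def)
  have dT: "det T \<noteq> 0"
  proof
    assume "det T = 0"
    then have "det (transpose_mat T) = 0" using det_transpose[OF T] by simp
    then obtain v where v: "v \<in> carrier_vec n" "v \<noteq> 0\<^sub>v n" "transpose_mat T *\<^sub>v v = 0\<^sub>v n"
      using det_0_iff_vec_prod_zero[of "transpose_mat T" n] T by auto
    have vj: "(\<Sum>i<n. v $ i * T $$ (i, j)) = 0" if j: "j < n" for j
    proof -
      have "(transpose_mat T *\<^sub>v v) $ j = 0" using v(3) j by simp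
      then show ?thesis using j T v(1) by (simp add: scalar_prod_def atLeast0LessThan mult.commute)
    qed
    have vd: "(\<Sum>i<n. v $ i * c (i + d)) = 0" if d: "d < n" for d
    proof -
      have ci: "c (i + d) = (\<Sum>j<n. T $$ (i, j) * (A ^\<^sub>m d * B) $$ (j, 0))" if i: "i < n" for i
      proof -
        have "c (i + d) = (q * A ^\<^sub>m i * (A ^\<^sub>m d * B)) $$ (0, 0)"
          unfolding c_def pow_mat_add[OF A]
          using assoc_mult_mat[OF q pow_carrier_mat[OF A] pow_carrier_mat[OF A], of i d]
            assoc_mult_mat[OF QA pow_carrier_mat[OF A] B, of i d]
            assoc_mult_mat[OF q pow_carrier_mat[OF A] AB, of i d] by simp
        also have "\<dots> = (\<Sum>j<n. T $$ (i, j) * (A ^\<^sub>m d * B) $$ (j, 0))"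
          using mult_entry[OF QA AB] i by (simp add: T_def)
        finally show ?thesis .
      qed
      have "(\<Sum>i<n. v $ i * c (i + d)) = (\<Sum>i<n. \<Sum>j<n. v $ i * T $$ (i, j) * (A ^\<^sub>m d * B) $$ (j, 0))"
        by (intro sum.cong) (auto simp: ci sum_distrib_left mult.assoc)
      also have "\<dots> = (\<Sum>j<n. (\<Sum>i<n. v $ i * T $$ (i, j)) * (A ^\<^sub>m d * B) $$ (j, 0))"
        by (subst sum.swap) (simp add: sum_distrib_right)
      also have "\<dots> = 0" by (simp add: vj)
      finally show ?thesis .
    qed
    have vz: "d < n \<Longrightarrow> v $ (n - 1 - d) = 0" for d
    proof (induction d rule: less_induct)
      case (less d)
      have "(\<Sum>i<n. v $ i * c (i + d)) = (\<Sum>i<n. if i = n - 1 - d then v $ i else 0)"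
      proof (intro sum.cong refl)
        fix i assume i: "i \<in> {..<n}"
        consider "i < n - 1 - d" | "i = n - 1 - d" | "i > n - 1 - d" by linarith
        then show "v $ i * c (i + d) = (if i = n - 1 - d then v $ i else 0)"
        proof cases
          case 1 then show ?thesis using c[of "i + d"] less.prems by auto
        next
          case 2 then show ?thesis using c[of "i + d"] less.prems by auto
        next
          case 3
          then have "v $ (n - 1 - (n - 1 - i)) = 0" using less.IH[of "n - 1 - i"] i less.prems by auto
          then show ?thesis using 3 i by auto
        qed
      qed
      then show ?case using vd[OF less.prems] less.prems by simp
    qed
    have "v = 0\<^sub>v n"
    proof (rule eq_vecI)
      fix i assume "i < dim_vec (0\<^sub>v n :: real vec)"
      then have i: "i < n" by simp
      then show "v $ i = 0\<^sub>v n $ i" using vz[of "n - 1 - i"] by simp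
    qed (use v(1) in simp)
    with v(2) show False ..
  qed
  have Kj: "K $$ (0, j) = (q * A ^\<^sub>m n) $$ (0, j) + (\<Sum>l<n. p (n - l) * T $$ (l, j))" if j: "j < n" for j
  proof -
    have "K $$ (0, j) = (\<Sum>t<n. q $$ (0, t) * P $$ (t, j))" using KqP mult_entry[OF q P _ j] by simp
    also have "\<dots> = (\<Sum>t<n. q $$ (0, t) * (A ^\<^sub>m n) $$ (t, j))
        + (\<Sum>t<n. \<Sum>k = 1..n. p k * (q $$ (0, t) * (A ^\<^sub>m (n - k)) $$ (t, j)))"
      using j by (simp add: P_def Phi_mat_def distrib_left sum.distrib sum_distrib_left mult.left_commute)
    also have "(\<Sum>t<n. \<Sum>k = 1..n. p k * (q $$ (0, t) * (A ^\<^sub>m (n - k)) $$ (t, j)))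
        = (\<Sum>k = 1..n. \<Sum>t<n. p k * (q $$ (0, t) * (A ^\<^sub>m (n - k)) $$ (t, j)))"
      by (rule sum.swap)
    also have "\<dots> = (\<Sum>k = 1..n. p k * (q * A ^\<^sub>m (n - k)) $$ (0, j))"
      using j by (intro sum.cong refl) (simp add: mult_entry[OF q pow_carrier_mat[OF A] _ j] sum_distrib_left)
    also have "\<dots> = (\<Sum>l<n. p (n - l) * T $$ (l, j))"
      unfolding sum_rev_1n using j by (intro sum.cong refl) (simp add: T_def diff_diff_cancel less_imp_le)
    also have "(\<Sum>t<n. q $$ (0, t) * (A ^\<^sub>m n) $$ (t, j)) = (q * A ^\<^sub>m n) $$ (0, j)"
      using mult_entry[OF q pow_carrier_mat[OF A] _ j] by simp
    finally show ?thesis .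
  qed
  have part2: "det (s \<cdot>\<^sub>m 1\<^sub>m n - A + B * K) = Phi n p s" for s
  proof -
    define M where "M = s \<cdot>\<^sub>m 1\<^sub>m n - A + B * K"
    define N where "N = Nmat n p s"
    have M: "M \<in> carrier_mat n n" unfolding M_def using A B K by simp
    have N: "N \<in> carrier_mat n n" unfolding N_def Nmat_def by simp
    have TM: "(T * M) $$ (i, j) = s * T $$ (i, j) - (q * A ^\<^sub>m Suc i) $$ (0, j) + c i * K $$ (0, j)"
      if ij: "i < n" "j < n" for i j
    proof -
      have "(T * M) $$ (i, j) = (\<Sum>t<n. (q * A ^\<^sub>m i) $$ (0, t) * M $$ (t, j))"
        using Trow[OF M ij] mult_entry[OF QA M _ ij(2)] by simp
      also have "\<dots> = (\<Sum>t<n. (q * A ^\<^sub>m i) $$ (0, t) * ((if t = j then s else 0) - A $$ (t, j) + B $$ (t, 0) * K $$ (0, j)))"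
        using ij A B K by (intro sum.cong) (auto simp: M_def scalar_prod_def)
      also have "\<dots> = s * T $$ (i, j) - (\<Sum>t<n. (q * A ^\<^sub>m i) $$ (0, t) * A $$ (t, j))
          + (\<Sum>t<n. (q * A ^\<^sub>m i) $$ (0, t) * B $$ (t, 0)) * K $$ (0, j)"
      proof -
        have "(\<Sum>t<n. (q * A ^\<^sub>m i) $$ (0, t) * ((if t = j then s else 0) - A $$ (t, j) + B $$ (t, 0) * K $$ (0, j)))
          = (\<Sum>t<n. (if t = j then s * (q * A ^\<^sub>m i) $$ (0, t) else 0) - (q * A ^\<^sub>m i) $$ (0, t) * A $$ (t, j)
              + (q * A ^\<^sub>m i) $$ (0, t) * B $$ (t, 0) * K $$ (0, j))"
          by (intro sum.cong) (auto simp: algebra_simps)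
        also have "\<dots> = (\<Sum>t<n. (if t = j then s * (q * A ^\<^sub>m i) $$ (0, t) else 0)) - (\<Sum>t<n. (q * A ^\<^sub>m i) $$ (0, t) * A $$ (t, j))
              + (\<Sum>t<n. (q * A ^\<^sub>m i) $$ (0, t) * B $$ (t, 0)) * K $$ (0, j)"
          by (simp add: sum.distrib sum_subtractf sum_distrib_right)
        finally show ?thesis using ij by (simp add: T_def)
      qed
      also have "(\<Sum>t<n. (q * A ^\<^sub>m i) $$ (0, t) * A $$ (t, j)) = (q * A ^\<^sub>m Suc i) $$ (0, j)"
        using mult_entry[OF QA[of i] A, of 0 j] ij assoc_mult_mat[OF q pow_carrier_mat[OF A] A, of i] by simp
      also have "(\<Sum>t<n. (q * A ^\<^sub>m i) $$ (0, t) * B $$ (t, 0)) = c i"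
        using mult_entry[OF QA[of i] B, of 0 0] unfolding c_def by simp
      finally show ?thesis .
    qed
    have NT: "(N * T) $$ (i, j) = s * T $$ (i, j) - (if Suc i < n then T $$ (Suc i, j) else 0)
        + (if i = n - 1 then (\<Sum>l<n. p (n - l) * T $$ (l, j)) else 0)"
      if ij: "i < n" "j < n" for i j
    proof -
      have "(N * T) $$ (i, j) = (\<Sum>l<n. N $$ (i, l) * T $$ (l, j))" using mult_entry[OF N T ij] .
      also have "\<dots> = (\<Sum>l<n. (if l = i then s * T $$ (l, j) else 0) - (if l = Suc i then T $$ (l, j) else 0)
          + (if i = n - 1 then p (n - l) * T $$ (l, j) else 0))"
        using ij by (intro sum.cong) (auto simp: N_def Nmat_def algebra_simps)
      also have "\<dots> = s * T $$ (i, j) - (if Suc i < n then T $$ (Suc i, j) else 0)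
        + (if i = n - 1 then (\<Sum>l<n. p (n - l) * T $$ (l, j)) else 0)"
        using ij by (simp add: sum.distrib sum_subtractf)
      finally show ?thesis .
    qed
    have eq: "T * M = N * T"
    proof (rule eq_matI)
      fix i j assume "i < dim_row (N * T)" "j < dim_col (N * T)"
      then have ij: "i < n" "j < n" using N T by auto
      show "(T * M) $$ (i, j) = (N * T) $$ (i, j)"
      proof (cases "i = n - 1")
        case True
        then have "Suc i = n" using n by simp
        then show ?thesis unfolding TM[OF ij] NT[OF ij] using True c[of i] ij Kj[OF ij(2)] by simp
      next
        case False
        then have "Suc i < n" using ij by simp
        then show ?thesis unfolding TM[OF ij] NT[OF ij] using False c[of i] ij by (simp add: T_def)
      qed
    qed (use M N T in auto)
    have "det T * det M = det N * det T"
      using det_mult[OF T M] det_mult[OF N T] eq by (simp only:)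
    then have "det M = det N" using dT by (simp add: mult.commute)
    also have "\<dots> = s ^ n + (\<Sum>l<n. p (n - l) * s ^ l)" unfolding N_def by (rule det_Nmat[OF n])
    also have "\<dots> = Phi n p s"
      unfolding Phi_def sum_rev_1n by (intro arg_cong[where f="\<lambda>x. s ^ n + x"] sum.cong) auto
    finally show ?thesis unfolding M_def .
  qed
  show ?thesis using part1 part2 unfolding K_def by blast
qed

end
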